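(* Let $\Gamma$ be a connected, non-complete distance-regular graph with fundamental group $G$ (as defined in the context), let $m,n>1$ be integers, and let $\rho: G\to S_{mn}$ be a transitive permutation representation such that $G\rho$ is imprimitive with $m$ blocks of imprimitivity, each of size $n$. Suppose that the associated cover $\Gamma_\rho$ is a distance-regular antipodal $mn$-cover of $\Gamma$. Let $\sigma: G\to S_m$ be the transitive action of $G\rho$ on its $m$ blocks of imprimitivity. Then $\Gamma_\rho$ is an $n$-cover of the $m$-cover $\Gamma_\sigma$ of $\Gamma$, and $\Gamma_\sigma$ is an antipodal distance-regular $m$-cover of $\Gamma$.
   Context: All graphs are finite, undirected, without loops or multiple edges. A graph $\Gamma$ is viewed as an abstract 2-dimensional simplicial complex whose 0-, 1-, 2-simplices are its vertices, edges and triangles. A cover of $\Gamma$ is a pair $(\tilde\Gamma,\theta)$ with $\tilde\Gamma$ a graph and $\theta:V(\tilde\Gamma)\to V(\Gamma)$ a surjection such that: each fibre $v\theta^{-1}$ is a coclique; the union of two distinct fibres over a non-edge of $\Gamma$ is a coclique; the subgraph induced on two fibres over an edge of $\Gamma$ is a perfect matching; the subgraph induced on three fibres over a triangle of $\Gamma$ is a disjoint union of triangles. It is an $r$-cover if all fibres have size $r$. For non-complete $\Gamma$, an antipodal $r$-cover is a connected $r$-cover $\tilde\Gamma$ in which "equal or at maximum distance in $\tilde\Gamma$" is an equivalence relation on $V(\tilde\Gamma)$ whose classes are the fibres. Fundamental group: fix a spanning tree $T$ of the connected graph $\Gamma$. $G$ is the group generated by symbols $g_{v,w}$, one for each ordered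 pair $(v,w)$ with $\{v,w\}$ an edge, subject to the relations $g_{s,t}=1$ for each arc $(s,t)$ of $T$, $g_{v,w}g_{w,v}=1$ for each edge $\{v,w\}$, and $g_{x,y}g_{y,z}g_{z,x}=1$ for each triangle $\{x,y,z\}$ (its isomorphism type does not depend on $T$). For a transitive permutation representation $\rho:G\to S_r$ (acting on $\{1,\dots,r\}$ on the right), the cover $\Gamma_\rho$ has vertex set $V(\Gamma)\times\{1,\dots,r\}$, covering map $(v,i)\mapsto v$, and $(v,i)\sim(w,j)$ iff $\{v,w\}\in E(\Gamma)$ and $j=i\,(g_{v,w}\rho)$; it is a connected $r$-cover of $\Gamma$. If $G\rho$ has blocks $B_1,\dots,B_m$ and $\sigma$ is the action on blocks, then $\Gamma_\rho$ is an $n$-cover of $\Gamma_\sigma$ via $(v,i)\mapsto (v,k)$ where $i\in B_k$. *)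

theory Defs
  imports Main
begin

definition graph :: "'a set \<Rightarrow> ('a \<Rightarrow> 'a \<Rightarrow> bool) \<Rightarrow> bool" where
  "graph V E \<longleftrightarrow> finite V \<and> (\<forall>x y. E x y \<longrightarrow> x \<in> V \<and> y \<in> V)
     \<and> (\<forall>x y. E x y \<longrightarrow> E y x) \<and> (\<forall>x. \<not> E x x)"

inductive walk_len :: "('a \<Rightarrow> 'a \<Rightarrow> bool) \<Rightarrow> nat \<Rightarrow> 'a \<Rightarrow> 'a \<Rightarrow> bool" for E where
  walk_nil: "walk_len E 0 x x"
| walk_cons: "E x y \<Longrightarrow> walk_len E n y z \<Longrightarrow> walk_len E (Suc n) x z"

definition gconnected :: "'a set \<Rightarrow> ('a \<Rightarrow> 'a \<Rightarrow> bool) \<Rightarrow> bool" where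
  "gconnected V E \<longleftrightarrow> V \<noteq> {} \<and> (\<forall>x\<in>V. \<forall>y\<in>V. \<exists>k. walk_len E k x y)"

definition gdist :: "('a \<Rightarrow> 'a \<Rightarrow> bool) \<Rightarrow> 'a \<Rightarrow> 'a \<Rightarrow> nat" where
  "gdist E x y = (LEAST k. walk_len E k x y)"

definition diameter :: "'a set \<Rightarrow> ('a \<Rightarrow> 'a \<Rightarrow> bool) \<Rightarrow> nat" where
  "diameter V E = Max {gdist E x y | x y. x \<in> V \<and> y \<in> V}"

definition complete_graph :: "'a set \<Rightarrow> ('a \<Rightarrow> 'a \<Rightarrow> bool) \<Rightarrow> bool" where
  "complete_graph V E \<longleftrightarrow> (\<forall>x\<in>V. \<forall>y\<in>V. x \<noteq> y \<longrightarrow> E x y)"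

text \<open>Distance-regular (Brouwer--Cohen--Neumaier): connected, and for vertices x, y at
  distance i the numbers c_i = |Gamma_{i-1}(x) \<inter> Gamma(y)| and
  b_i = |Gamma_{i+1}(x) \<inter> Gamma(y)| depend only on i.\<close>

definition sphere :: "'a set \<Rightarrow> ('a \<Rightarrow> 'a \<Rightarrow> bool) \<Rightarrow> nat \<Rightarrow> 'a \<Rightarrow> 'a set" where
  "sphere V E i x = {z \<in> V. gdist E x z = i}"

definition distance_regular :: "'a set \<Rightarrow> ('a \<Rightarrow> 'a \<Rightarrow> bool) \<Rightarrow> bool" where
  "distance_regular V E \<longleftrightarrow> graph V E \<and> gconnected V E \<and>
     (\<forall>x\<in>V. \<forall>y\<in>V. \<forall>x'\<in>V. \<forall>y'\<in>V. gdist E x y = gdist E x' y' \<longrightarrow>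
        card (sphere V E (gdist E x y - 1) x \<inter> {z. E y z})
          = card (sphere V E (gdist E x' y' - 1) x' \<inter> {z. E y' z})
      \<and> card (sphere V E (gdist E x y + 1) x \<inter> {z. E y z})
          = card (sphere V E (gdist E x' y' + 1) x' \<inter> {z. E y' z}))"

definition coclique :: "('a \<Rightarrow> 'a \<Rightarrow> bool) \<Rightarrow> 'a set \<Rightarrow> bool" where
  "coclique E S \<longleftrightarrow> (\<forall>x\<in>S. \<forall>y\<in>S. \<not> E x y)"

definition perfect_matching_on :: "('a \<Rightarrow> 'a \<Rightarrow> bool) \<Rightarrow> 'a set \<Rightarrow> bool" where
  "perfect_matching_on E S \<longleftrightarrow> (\<forall>x\<in>S. card {y\<in>S. E x y} = 1)"

definition triangles_on :: "('a \<Rightarrow> 'a \<Rightarrow> bool) \<Rightarrow> 'a set \<Rightarrow> bool" where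
  "triangles_on E S \<longleftrightarrow> (\<forall>x\<in>S. card {y\<in>S. E x y} = 2 \<and>
      (\<forall>y\<in>S. \<forall>z\<in>S. E x y \<and> E x z \<and> y \<noteq> z \<longrightarrow> E y z))"

definition fibre :: "'b set \<Rightarrow> ('b \<Rightarrow> 'a) \<Rightarrow> 'a \<Rightarrow> 'b set" where
  "fibre V' \<theta> v = {x \<in> V'. \<theta> x = v}"

definition is_cover :: "'a set \<Rightarrow> ('a \<Rightarrow> 'a \<Rightarrow> bool) \<Rightarrow> 'b set \<Rightarrow> ('b \<Rightarrow> 'b \<Rightarrow> bool)
    \<Rightarrow> ('b \<Rightarrow> 'a) \<Rightarrow> bool" where
  "is_cover V E V' E' \<theta> \<longleftrightarrow> graph V E \<and> graph V' E' \<and> \<theta> ` V' = V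
     \<and> (\<forall>v\<in>V. coclique E' (fibre V' \<theta> v))
     \<and> (\<forall>v\<in>V. \<forall>w\<in>V. v \<noteq> w \<and> \<not> E v w \<longrightarrow> coclique E' (fibre V' \<theta> v \<union> fibre V' \<theta> w))
     \<and> (\<forall>v w. E v w \<longrightarrow> perfect_matching_on E' (fibre V' \<theta> v \<union> fibre V' \<theta> w))
     \<and> (\<forall>x y z. E x y \<and> E y z \<and> E x z \<longrightarrow>
          triangles_on E' (fibre V' \<theta> x \<union> fibre V' \<theta> y \<union> fibre V' \<theta> z))"

definition r_cover :: "'a set \<Rightarrow> ('a \<Rightarrow> 'a \<Rightarrow> bool) \<Rightarrow> 'b set \<Rightarrow> ('b \<Rightarrow> 'b \<Rightarrow> bool)
    \<Rightarrow> ('b \<Rightarrow> 'a) \<Rightarrow> nat \<Rightarrow> bool" where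
  "r_cover V E V' E' \<theta> r \<longleftrightarrow> is_cover V E V' E' \<theta> \<and> (\<forall>v\<in>V. card (fibre V' \<theta> v) = r)"

text \<open>Antipodal r-cover of a non-complete graph: connected r-cover in which
  "equal or at maximum distance" is an equivalence relation whose classes are the fibres
  (i.e. it coincides with "same fibre").\<close>
definition antipodal_cover :: "'a set \<Rightarrow> ('a \<Rightarrow> 'a \<Rightarrow> bool) \<Rightarrow> 'b set \<Rightarrow> ('b \<Rightarrow> 'b \<Rightarrow> bool)
    \<Rightarrow> ('b \<Rightarrow> 'a) \<Rightarrow> nat \<Rightarrow> bool" where
  "antipodal_cover V E V' E' \<theta> r \<longleftrightarrow> \<not> complete_graph V E \<and> r_cover V E V' E' \<theta> r
     \<and> gconnected V' E'
     \<and> (\<forall>x\<in>V'. \<forall>y\<in>V'. (x = y \<or> gdist E' x y = diameter V' E') \<longleftrightarrow> \<theta> x = \<theta> y)"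

definition spanning_tree :: "'a set \<Rightarrow> ('a \<Rightarrow> 'a \<Rightarrow> bool) \<Rightarrow> 'a set set \<Rightarrow> bool" where
  "spanning_tree V E T \<longleftrightarrow> T \<subseteq> {{v, w} | v w. E v w}
     \<and> gconnected V (\<lambda>x y. {x, y} \<in> T) \<and> card T = card V - 1"

text \<open>A permutation representation rho : G \<rightarrow> S_r of the fundamental group G (given by
  the presentation in the paper) is, by the universal property of presentations, the
  same as an assignment of permutations pi v w = g_{v,w} rho of {0..<r} to the
  generators satisfying the defining relations (right action: i \<cdot> (gh) = (i \<cdot> g) \<cdot> h).\<close>
definition fg_rep :: "'a set \<Rightarrow> ('a \<Rightarrow> 'a \<Rightarrow> bool) \<Rightarrow> 'a set set \<Rightarrow> nat
    \<Rightarrow> ('a \<Rightarrow> 'a \<Rightarrow> nat \<Rightarrow> nat) \<Rightarrow> bool" where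
  "fg_rep V E T r \<pi> \<longleftrightarrow>
     (\<forall>v w. E v w \<longrightarrow> bij_betw (\<pi> v w) {0..<r} {0..<r})
   \<and> (\<forall>s t. {s, t} \<in> T \<longrightarrow> (\<forall>i<r. \<pi> s t i = i))
   \<and> (\<forall>v w. E v w \<longrightarrow> (\<forall>i<r. \<pi> w v (\<pi> v w i) = i))
   \<and> (\<forall>x y z. E x y \<and> E y z \<and> E z x \<longrightarrow> (\<forall>i<r. \<pi> z x (\<pi> y z (\<pi> x y i)) = i))"

definition transitive_rep :: "('a \<Rightarrow> 'a \<Rightarrow> bool) \<Rightarrow> nat \<Rightarrow> ('a \<Rightarrow> 'a \<Rightarrow> nat \<Rightarrow> nat) \<Rightarrow> bool" where
  "transitive_rep E r \<pi> \<longleftrightarrow>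
     (\<forall>i<r. \<forall>j<r. (i, j) \<in> {(k, \<pi> v w k) | k v w. k < r \<and> E v w}\<^sup>*)"

definition cover_graph :: "'a set \<Rightarrow> ('a \<Rightarrow> 'a \<Rightarrow> bool) \<Rightarrow> nat \<Rightarrow> ('a \<Rightarrow> 'a \<Rightarrow> nat \<Rightarrow> nat)
    \<Rightarrow> ('a \<times> nat) \<Rightarrow> ('a \<times> nat) \<Rightarrow> bool" where
  "cover_graph V E r \<pi> = (\<lambda>(v, i) (w, j). v \<in> V \<and> w \<in> V \<and> i < r \<and> j < r \<and> E v w \<and> j = \<pi> v w i)"

end

theory Submission
  imports Defs
begin


lemma walk_snoc: "walk_len E k x y \<Longrightarrow> E y z \<Longrightarrow> walk_len E (Suc k) x z"
  by (induction rule: walk_len.induct) (auto intro: walk_len.intros)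

lemma walk_sym:
  assumes "\<And>x y. E x y \<Longrightarrow> E y x" shows "walk_len E k x y \<Longrightarrow> walk_len E k y x"
  by (induction rule: walk_len.induct) (auto intro: walk_len.intros walk_snoc assms)

lemma walk_append: "walk_len E a x y \<Longrightarrow> walk_len E b y z \<Longrightarrow> walk_len E (a + b) x z"
  by (induction rule: walk_len.induct) (auto intro: walk_len.intros)

lemma walk_zero[simp]: "walk_len E 0 x y \<longleftrightarrow> x = y"
  by (auto elim: walk_len.cases intro: walk_len.intros)

lemma walk_Suc: "walk_len E (Suc k) x z \<longleftrightarrow> (\<exists>y. E x y \<and> walk_len E k y z)"
  by (auto elim: walk_len.cases intro: walk_len.intros)

lemma walk_split: "walk_len E (a + b) x z \<Longrightarrow> \<exists>y. walk_len E a x y \<and> walk_len E b y z"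
proof (induction a arbitrary: x)
  case 0 then show ?case by auto
next
  case (Suc a)
  then obtain y where "E x y" "walk_len E (a + b) y z" by (auto simp: walk_Suc)
  with Suc.IH obtain u where "walk_len E a y u" "walk_len E b u z" by blast
  then show ?case using \<open>E x y\<close> by (auto simp: walk_Suc)
qed

lemma walk_in: assumes "graph V E" shows "walk_len E k x y \<Longrightarrow> x \<in> V \<Longrightarrow> y \<in> V"
  by (induction rule: walk_len.induct) (use assms in \<open>auto simp: graph_def\<close>)

lemma walk_map:
  assumes "\<And>x y. E x y \<Longrightarrow> E' (f x) (f y)"
  shows "walk_len E k x y \<Longrightarrow> walk_len E' k (f x) (f y)"
  by (induction rule: walk_len.induct) (auto intro: walk_len.intros assms)

locale cgraph =
  fixes V :: "'a set" and E :: "'a \<Rightarrow> 'a \<Rightarrow> bool"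
  assumes gr: "graph V E" and conn: "gconnected V E"
begin

abbreviation "d \<equiv> gdist E"

lemma fin: "finite V" using gr by (simp add: graph_def)
lemma symE: "E x y \<Longrightarrow> E y x" using gr by (simp add: graph_def)
lemma irr: "\<not> E x x" using gr by (simp add: graph_def)
lemma inV: "E x y \<Longrightarrow> x \<in> V \<and> y \<in> V" using gr by (simp add: graph_def)
lemma nonempty: "V \<noteq> {}" using conn by (simp add: gconnected_def)

lemma ex_walk: "x \<in> V \<Longrightarrow> y \<in> V \<Longrightarrow> \<exists>k. walk_len E k x y"
  using conn by (simp add: gconnected_def)

lemma walk_d: "x \<in> V \<Longrightarrow> y \<in> V \<Longrightarrow> walk_len E (d x y) x y"
  unfolding gdist_def using ex_walk by (metis LeastI_ex)

lemma d_le: "walk_len E k x y \<Longrightarrow> d x y \<le> k"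
  unfolding gdist_def by (rule Least_le)

lemma d_sym: "x \<in> V \<Longrightarrow> y \<in> V \<Longrightarrow> d x y = d y x"
  by (meson antisym d_le symE walk_d walk_sym)

lemma d_tri: "x \<in> V \<Longrightarrow> y \<in> V \<Longrightarrow> z \<in> V \<Longrightarrow> d x z \<le> d x y + d y z"
  by (meson d_le walk_append walk_d)

lemma d_0: "x \<in> V \<Longrightarrow> y \<in> V \<Longrightarrow> d x y = 0 \<longleftrightarrow> x = y"
  by (metis d_le le_zero_eq walk_d walk_len.walk_nil walk_zero)

lemma d_refl[simp]: "d x x = 0"
  by (metis d_le le_zero_eq walk_len.walk_nil)

lemma d_adj: "E x y \<Longrightarrow> d x y = 1"
proof -
  assume e: "E x y"
  have "d x y \<le> 1" using e by (metis One_nat_def d_le walk_len.intros)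
  moreover have "d x y \<noteq> 0" using e inV irr d_0 by metis
  ultimately show ?thesis by simp
qed

lemma d_adj_diff: "x \<in> V \<Longrightarrow> E y z \<Longrightarrow> d x z \<le> d x y + 1 \<and> d x y \<le> d x z + 1"
  by (metis d_adj d_tri inV symE)

lemma d_le_diam: "x \<in> V \<Longrightarrow> y \<in> V \<Longrightarrow> d x y \<le> diameter V E"
  unfolding diameter_def
  by (rule Max_ge) (auto intro!: finite_image_set2 fin)

lemma diam_attained: "\<exists>x\<in>V. \<exists>y\<in>V. d x y = diameter V E"
proof -
  have "diameter V E \<in> {gdist E x y | x y. x \<in> V \<and> y \<in> V}"
    unfolding diameter_def
    by (rule Max_in) (use fin nonempty in \<open>auto intro!: finite_image_set2\<close>)
  then show ?thesis by fastforce
qed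

lemma d_walk_split:
  assumes "x \<in> V" "y \<in> V" "t \<le> d x y"
  shows "\<exists>u\<in>V. d x u = t \<and> d u y = d x y - t"
proof -
  have "walk_len E (t + (d x y - t)) x y" using walk_d assms by simp
  then obtain u where u: "walk_len E t x u" "walk_len E (d x y - t) u y" using walk_split by metis
  have uV: "u \<in> V" using walk_in[OF gr walk_sym[OF symE u(2)]] assms by auto
  have 1: "d x u \<le> t" "d u y \<le> d x y - t" using u d_le by auto
  have "d x y \<le> d x u + d u y" using d_tri assms uV by auto
  then show ?thesis using 1 uV assms by (intro bexI[of _ u]) auto
qed

end




lemma cover_graph_simp:
  "cover_graph V E r \<sigma> (v, i) (w, j) \<longleftrightarrow> v \<in> V \<and> w \<in> V \<and> i < r \<and> j < r \<and> E v w \<and> j = \<sigma> v w i"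
  by (simp add: cover_graph_def)

lemma generic_cover:
  assumes g: "graph V E" and r0: "r > 0"
    and s1: "\<And>v w i. E v w \<Longrightarrow> i < r \<Longrightarrow> \<sigma> v w i < r"
    and s2: "\<And>v w i. E v w \<Longrightarrow> i < r \<Longrightarrow> \<sigma> w v (\<sigma> v w i) = i"
    and s3: "\<And>x y z i. E x y \<Longrightarrow> E y z \<Longrightarrow> E z x \<Longrightarrow> i < r \<Longrightarrow> \<sigma> z x (\<sigma> y z (\<sigma> x y i)) = i"
  shows "r_cover V E (V \<times> {0..<r}) (cover_graph V E r \<sigma>) fst r"
proof -
  let ?C = "cover_graph V E r \<sigma>"
  have symE: "\<And>x y. E x y \<Longrightarrow> E y x" and irr: "\<And>x. \<not> E x x" and inV: "\<And>x y. E x y \<Longrightarrow> x \<in> V \<and> y \<in> V"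
    using g by (auto simp: graph_def)
  have fin: "finite V" using g by (simp add: graph_def)
  have gC: "graph (V \<times> {0..<r}) ?C"
    unfolding graph_def using fin
    by (auto simp: cover_graph_def symE s2 s1 irr)
  have fib: "\<And>v. v \<in> V \<Longrightarrow> fibre (V \<times> {0..<r}) fst v = {v} \<times> {0..<r}"
    by (auto simp: fibre_def)
  have img: "fst ` (V \<times> {0..<r}) = V" using r0 by force
  have cocl: "\<forall>v\<in>V. coclique ?C (fibre (V \<times> {0..<r}) fst v)"
    by (auto simp: fib coclique_def cover_graph_def irr)
  have nonadj: "\<forall>v\<in>V. \<forall>w\<in>V. v \<noteq> w \<and> \<not> E v w \<longrightarrow>
      coclique ?C (fibre (V \<times> {0..<r}) fst v \<union> fibre (V \<times> {0..<r}) fst w)"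
    by (auto simp: fib coclique_def cover_graph_def irr) (use symE in blast)+
  have pm: "\<forall>v w. E v w \<longrightarrow> perfect_matching_on ?C (fibre (V \<times> {0..<r}) fst v \<union> fibre (V \<times> {0..<r}) fst w)"
  proof (intro allI impI)
    fix v w assume e: "E v w"
    have vw: "v \<in> V" "w \<in> V" "v \<noteq> w" using inV[OF e] e irr by auto
    show "perfect_matching_on ?C (fibre (V \<times> {0..<r}) fst v \<union> fibre (V \<times> {0..<r}) fst w)"
      unfolding perfect_matching_on_def
    proof
      fix x assume x: "x \<in> fibre (V \<times> {0..<r}) fst v \<union> fibre (V \<times> {0..<r}) fst w"
      then obtain a i where xa: "x = (a, i)" "i < r" "a = v \<or> a = w" using vw by (auto simp: fib)
      define b where "b = (if a = v then w else v)"
      have eab: "E a b" using xa e symE by (auto simp: b_def)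
      have "{y \<in> fibre (V \<times> {0..<r}) fst v \<union> fibre (V \<times> {0..<r}) fst w. ?C x y} = {(b, \<sigma> a b i)}"
        using xa vw eab s1 irr by (auto simp: fib cover_graph_def b_def)
      then show "card {y \<in> fibre (V \<times> {0..<r}) fst v \<union> fibre (V \<times> {0..<r}) fst w. ?C x y} = 1" by simp
    qed
  qed
  have tri: "\<forall>x y z. E x y \<and> E y z \<and> E x z \<longrightarrow> triangles_on ?C
      (fibre (V \<times> {0..<r}) fst x \<union> fibre (V \<times> {0..<r}) fst y \<union> fibre (V \<times> {0..<r}) fst z)"
  proof (intro allI impI)
    fix x y z assume exyz: "E x y \<and> E y z \<and> E x z"
    have V3: "x \<in> V" "y \<in> V" "z \<in> V" using exyz inV by auto
    have S: "fibre (V \<times> {0..<r}) fst x \<union> fibre (V \<times> {0..<r}) fst y \<union> fibre (V \<times> {0..<r}) fst z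
       = {x, y, z} \<times> {0..<r}" using V3 by (auto simp: fib)
    have key: "\<And>a b c i. {a, b, c} = {x, y, z} \<Longrightarrow> E a b \<Longrightarrow> E b c \<Longrightarrow> E a c \<Longrightarrow> i < r \<Longrightarrow>
        card {u \<in> {x, y, z} \<times> {0..<r}. ?C (a, i) u} = 2 \<and>
        (\<forall>u\<in>{x, y, z} \<times> {0..<r}. \<forall>u'\<in>{x, y, z} \<times> {0..<r}. ?C (a, i) u \<and> ?C (a, i) u' \<and> u \<noteq> u' \<longrightarrow> ?C u u')"
    proof -
      fix a b c i assume abc: "{a, b, c} = {x, y, z}" and eab: "E a b" and ebc: "E b c" and eac: "E a c" and i: "i < r"
      have abcV: "a \<in> V" "b \<in> V" "c \<in> V" using eab ebc inV by auto
      have dis: "a \<noteq> b" "b \<noteq> c" "a \<noteq> c" using eab ebc eac irr by auto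
      have N: "{u \<in> {x, y, z} \<times> {0..<r}. ?C (a, i) u} = {(b, \<sigma> a b i), (c, \<sigma> a c i)}"
        using abc[symmetric] abcV dis i eab eac s1 irr by (auto simp: cover_graph_def)
      have comm: "\<sigma> b c (\<sigma> a b i) = \<sigma> a c i"
      proof -
        have "\<sigma> c a (\<sigma> b c (\<sigma> a b i)) = i" using s3[OF eab ebc symE[OF eac] i] .
        then have "\<sigma> a c (\<sigma> c a (\<sigma> b c (\<sigma> a b i))) = \<sigma> a c i" by simp
        moreover have "\<sigma> a c (\<sigma> c a (\<sigma> b c (\<sigma> a b i))) = \<sigma> b c (\<sigma> a b i)"
          using s2[OF symE[OF eac]] s1 eab ebc i by auto
        ultimately show ?thesis by simp
      qed
      have e1: "?C (b, \<sigma> a b i) (c, \<sigma> a c i)" using comm abcV ebc s1 eab eac i by (auto simp: cover_graph_def)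
      have e2: "?C (c, \<sigma> a c i) (b, \<sigma> a b i)" using e1 gC by (auto simp: graph_def)
      show "card {u \<in> {x, y, z} \<times> {0..<r}. ?C (a, i) u} = 2 \<and>
        (\<forall>u\<in>{x, y, z} \<times> {0..<r}. \<forall>u'\<in>{x, y, z} \<times> {0..<r}. ?C (a, i) u \<and> ?C (a, i) u' \<and> u \<noteq> u' \<longrightarrow> ?C u u')"
      proof
        show "card {u \<in> {x, y, z} \<times> {0..<r}. ?C (a, i) u} = 2" unfolding N using dis by simp
        show "\<forall>u\<in>{x, y, z} \<times> {0..<r}. \<forall>u'\<in>{x, y, z} \<times> {0..<r}. ?C (a, i) u \<and> ?C (a, i) u' \<and> u \<noteq> u' \<longrightarrow> ?C u u'"
        proof (intro ballI impI)
          fix u u' assume uu: "u \<in> {x, y, z} \<times> {0..<r}" "u' \<in> {x, y, z} \<times> {0..<r}" "?C (a, i) u \<and> ?C (a, i) u' \<and> u \<noteq> u'"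
          have "u \<in> {u \<in> {x, y, z} \<times> {0..<r}. ?C (a, i) u}" "u' \<in> {u \<in> {x, y, z} \<times> {0..<r}. ?C (a, i) u}"
            using uu by simp_all
          then have "u \<in> {(b, \<sigma> a b i), (c, \<sigma> a c i)}" "u' \<in> {(b, \<sigma> a b i), (c, \<sigma> a c i)}"
            unfolding N by simp_all
          then show "?C u u'" using uu e1 e2 by auto
        qed
      qed
    qed
    show "triangles_on ?C (fibre (V \<times> {0..<r}) fst x \<union> fibre (V \<times> {0..<r}) fst y \<union> fibre (V \<times> {0..<r}) fst z)"
      unfolding S triangles_on_def
    proof
      fix u assume u: "u \<in> {x, y, z} \<times> {0..<r}"
      then obtain a i where ua: "u = (a, i)" "i < r" "a = x \<or> a = y \<or> a = z" by auto
      have exx: "E x y" "E y z" "E x z" "E y x" "E z y" "E z x" using exyz symE by auto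
      from ua(3) show "card {y' \<in> {x, y, z} \<times> {0..<r}. ?C u y'} = 2 \<and>
         (\<forall>y'\<in>{x, y, z} \<times> {0..<r}. \<forall>z'\<in>{x, y, z} \<times> {0..<r}. ?C u y' \<and> ?C u z' \<and> y' \<noteq> z' \<longrightarrow> ?C y' z')"
      proof (elim disjE)
        assume "a = x" then show ?thesis using key[OF refl exx(1) exx(2) exx(3) ua(2)] ua(1) by simp
      next
        assume "a = y" then show ?thesis using key[of y x z i, OF _ exx(4) exx(3) exx(2) ua(2)] ua(1)
          by (simp add: insert_commute)
      next
        assume "a = z" then show ?thesis using key[of z x y i, OF _ exx(6) exx(1) exx(5) ua(2)] ua(1)
          by (simp add: insert_commute)
      qed
    qed
  qed
  have card: "\<forall>v\<in>V. card (fibre (V \<times> {0..<r}) fst v) = r"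
    by (simp add: fib card_cartesian_product)
  show ?thesis unfolding r_cover_def is_cover_def
    using g gC img cocl nonadj pm tri card by blast
qed




locale S =
  fixes V :: "'a set" and E :: "'a \<Rightarrow> 'a \<Rightarrow> bool" and T :: "'a set set"
    and m n :: nat and \<pi> :: "'a \<Rightarrow> 'a \<Rightarrow> nat \<Rightarrow> nat"
    and blk :: "nat \<Rightarrow> nat" and \<tau> :: "'a \<Rightarrow> 'a \<Rightarrow> nat \<Rightarrow> nat"
  assumes drg: "distance_regular V E"
    and noncomplete: "\<not> complete_graph V E"
    and m_gt: "m > 1" and n_gt: "n > 1"
    and rho: "fg_rep V E T (m * n) \<pi>"
    and blocks_onto: "blk ` {0..<m * n} = {0..<m}"
    and blocks_size: "\<forall>k<m. card {i. i < m * n \<and> blk i = k} = n"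
    and sigma: "\<forall>v w. E v w \<longrightarrow> (\<forall>i<m * n. \<tau> v w (blk i) = blk (\<pi> v w i))"
    and cover_drg: "distance_regular (V \<times> {0..<m * n}) (cover_graph V E (m * n) \<pi>)"
    and cover_antipodal: "antipodal_cover V E (V \<times> {0..<m * n}) (cover_graph V E (m * n) \<pi>) fst (m * n)"
begin

abbreviation "r \<equiv> m * n"
abbreviation "VC \<equiv> V \<times> {0..<r}"
abbreviation "EC \<equiv> cover_graph V E r \<pi>"
abbreviation "VQ \<equiv> V \<times> {0..<m}"
abbreviation "EQ \<equiv> cover_graph V E m \<tau>"
definition p :: "'a \<times> nat \<Rightarrow> 'a \<times> nat" where "p = (\<lambda>(v, i). (v, blk i))"
abbreviation "dC \<equiv> gdist EC"
abbreviation "dQ \<equiv> gdist EQ"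
abbreviation "D \<equiv> diameter VC EC"

lemma gG: "graph V E" using drg by (simp add: distance_regular_def)
lemma symG: "E x y \<Longrightarrow> E y x" using gG by (simp add: graph_def)
lemma irrG: "\<not> E x x" using gG by (simp add: graph_def)
lemma inVG: "E x y \<Longrightarrow> x \<in> V \<and> y \<in> V" using gG by (simp add: graph_def)

lemma pi_lt: "E v w \<Longrightarrow> i < r \<Longrightarrow> \<pi> v w i < r"
  using rho unfolding fg_rep_def by (meson atLeastLessThan_iff bij_betw_apply zero_le)
lemma pi_inv: "E v w \<Longrightarrow> i < r \<Longrightarrow> \<pi> w v (\<pi> v w i) = i"
  using rho unfolding fg_rep_def by blast
lemma pi_tri: "E x y \<Longrightarrow> E y z \<Longrightarrow> E z x \<Longrightarrow> i < r \<Longrightarrow> \<pi> z x (\<pi> y z (\<pi> x y i)) = i"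
  using rho unfolding fg_rep_def by blast
lemma pi_inj: "E v w \<Longrightarrow> i < r \<Longrightarrow> j < r \<Longrightarrow> \<pi> v w i = \<pi> v w j \<Longrightarrow> i = j"
  by (metis pi_inv)

lemma blk_lt: "i < r \<Longrightarrow> blk i < m"
  using blocks_onto by (metis atLeastLessThan_iff image_eqI zero_le)
lemma blk_onto: "k < m \<Longrightarrow> \<exists>i<r. blk i = k"
  using blocks_onto by (metis atLeastLessThan_iff imageE zero_le)

lemma tau_eq: "E v w \<Longrightarrow> i < r \<Longrightarrow> \<tau> v w (blk i) = blk (\<pi> v w i)"
  using sigma by blast
lemma tau_lt: "E v w \<Longrightarrow> k < m \<Longrightarrow> \<tau> v w k < m"
  by (metis blk_onto blk_lt pi_lt tau_eq)
lemma tau_inv: "E v w \<Longrightarrow> k < m \<Longrightarrow> \<tau> w v (\<tau> v w k) = k"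
  by (metis blk_onto pi_inv pi_lt symG tau_eq)
lemma tau_tri: "E x y \<Longrightarrow> E y z \<Longrightarrow> E z x \<Longrightarrow> k < m \<Longrightarrow> \<tau> z x (\<tau> y z (\<tau> x y k)) = k"
  by (metis blk_onto pi_tri pi_lt tau_eq)

lemma m_pos: "m > 0" and n_pos: "n > 0" and r_pos: "r > 0" using m_gt n_gt by auto

lemma Q_rcover: "r_cover V E VQ EQ fst m"
  by (rule generic_cover[OF gG m_pos tau_lt tau_inv tau_tri])

lemma gQ: "graph VQ EQ" using Q_rcover by (simp add: r_cover_def is_cover_def)

lemma gC: "graph VC EC" and connC: "gconnected VC EC"
  using cover_drg by (simp_all add: distance_regular_def)

lemma EC_simp: "EC (v, i) (w, j) \<longleftrightarrow> v \<in> V \<and> w \<in> V \<and> i < r \<and> j < r \<and> E v w \<and> j = \<pi> v w i"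
  by (simp add: cover_graph_def)
lemma EQ_simp: "EQ (v, i) (w, j) \<longleftrightarrow> v \<in> V \<and> w \<in> V \<and> i < m \<and> j < m \<and> E v w \<and> j = \<tau> v w i"
  by (simp add: cover_graph_def)

lemma p_simp[simp]: "p (v, i) = (v, blk i)" by (simp add: p_def)

lemma p_in: "a \<in> VC \<Longrightarrow> p a \<in> VQ" using blk_lt by (auto simp: p_def)

lemma p_onto: "A \<in> VQ \<Longrightarrow> \<exists>a\<in>VC. p a = A"
  using blk_onto by (cases A) force

lemma p_edge: "EC a b \<Longrightarrow> EQ (p a) (p b)"
  by (cases a; cases b) (auto simp: EC_simp EQ_simp blk_lt tau_eq)

lemma p_walk: "walk_len EC k a b \<Longrightarrow> walk_len EQ k (p a) (p b)"
  by (rule walk_map[where E=EC and E'=EQ and f=p, OF p_edge])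

lemma lift_walk: "walk_len EQ k A B \<Longrightarrow> a \<in> VC \<Longrightarrow> p a = A \<Longrightarrow> \<exists>b. p b = B \<and> walk_len EC k a b"
proof (induction arbitrary: a rule: walk_len.induct)
  case (walk_nil x) then show ?case by (auto intro: walk_len.intros)
next
  case (walk_cons x y k z)
  obtain v i where a: "a = (v, i)" "v \<in> V" "i < r" using walk_cons.prems by auto
  obtain w l where y: "y = (w, l)" by (cases y)
  have e: "E v w" "l = \<tau> v w (blk i)" using walk_cons.hyps(1) walk_cons.prems a y by (auto simp: EQ_simp)
  define a' where "a' = (w, \<pi> v w i)"
  have ea: "EC a a'" using a e inVG pi_lt by (auto simp: a'_def EC_simp)
  have "a' \<in> VC" "p a' = y" using e a pi_lt inVG tau_eq by (auto simp: a'_def y)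
  then obtain b where "p b = z" "walk_len EC k a' b" using walk_cons.IH by blast
  then show ?case using ea by (intro exI[of _ b]) (auto intro: walk_len.intros)
qed

sublocale C: cgraph VC EC using gC connC by unfold_locales

lemma connQ: "gconnected VQ EQ"
proof -
  have "VQ \<noteq> {}" using C.nonempty m_pos by auto
  moreover have "\<exists>k. walk_len EQ k A B" if AB: "A \<in> VQ" "B \<in> VQ" for A B
  proof -
    obtain a where a: "a \<in> VC" "p a = A" using p_onto[OF AB(1)] by blast
    obtain b where b: "b \<in> VC" "p b = B" using p_onto[OF AB(2)] by blast
    obtain k where "walk_len EC k a b" using C.ex_walk a b by blast
    then show ?thesis using p_walk a b by metis
  qed
  ultimately show ?thesis by (simp add: gconnected_def)
qed

sublocale Q: cgraph VQ EQ using gQ connQ by unfold_locales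

definition Bk :: "'a \<times> nat \<Rightarrow> ('a \<times> nat) set" where "Bk A = {a \<in> VC. p a = A}"

lemma K1: "a \<in> VC \<Longrightarrow> b \<in> VC \<Longrightarrow> dQ (p a) (p b) \<le> dC a b"
  using C.walk_d p_walk Q.d_le by blast

lemma K2: "a \<in> VC \<Longrightarrow> B \<in> VQ \<Longrightarrow> \<exists>b\<in>Bk B. dC a b = dQ (p a) B"
proof -
  assume a: "a \<in> VC" and B: "B \<in> VQ"
  obtain b where b: "p b = B" "walk_len EC (dQ (p a) B) a b"
    using lift_walk[OF Q.walk_d[OF p_in[OF a] B] a refl] by blast
  have bV: "b \<in> VC" using walk_in[OF gC b(2) a] .
  have "dC a b \<le> dQ (p a) B" using C.d_le b(2) .
  moreover have "dQ (p a) B \<le> dC a b" using K1[OF a bV] b(1) by simp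
  ultimately have "dC a b = dQ (p a) B" by (rule antisym)
  then show ?thesis using bV b(1) unfolding Bk_def by blast
qed

end



lemma (in cgraph) d1_edge: "x \<in> V \<Longrightarrow> y \<in> V \<Longrightarrow> d x y = 1 \<Longrightarrow> E x y"
  using walk_d[of x y] by (auto simp: walk_Suc One_nat_def)

context S begin

lemma antiC: "x \<in> VC \<Longrightarrow> y \<in> VC \<Longrightarrow> (x = y \<or> dC x y = D) \<longleftrightarrow> fst x = fst y"
  using cover_antipodal unfolding antipodal_cover_def by blast

lemma anti1: "x \<in> VC \<Longrightarrow> y \<in> VC \<Longrightarrow> fst x = fst y \<Longrightarrow> x \<noteq> y \<Longrightarrow> dC x y = D"
  using antiC by blast
lemma anti2: "x \<in> VC \<Longrightarrow> y \<in> VC \<Longrightarrow> dC x y = D \<Longrightarrow> fst x = fst y"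
  using antiC by blast

lemma drgC: "x \<in> VC \<Longrightarrow> y \<in> VC \<Longrightarrow> x' \<in> VC \<Longrightarrow> y' \<in> VC \<Longrightarrow> dC x y = dC x' y' \<Longrightarrow>
    card (sphere VC EC (dC x y - 1) x \<inter> {z. EC y z}) = card (sphere VC EC (dC x' y' - 1) x' \<inter> {z. EC y' z})
  \<and> card (sphere VC EC (dC x y + 1) x \<inter> {z. EC y z}) = card (sphere VC EC (dC x' y' + 1) x' \<inter> {z. EC y' z})"
  using cover_drg unfolding distance_regular_def by blast

lemma fin_sph: "finite (sphere VC EC k a \<inter> X)"
  by (rule finite_Int) (simp add: sphere_def C.fin)

lemma b_pos:
  assumes t: "t < D" and x: "x \<in> VC" and u: "u \<in> VC" and dt: "dC x u = t"
  shows "\<exists>u'. EC u u' \<and> dC x u' = Suc t"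
proof -
  obtain a b where ab: "a \<in> VC" "b \<in> VC" "dC a b = D" using C.diam_attained by blast
  obtain g' where g': "g' \<in> VC" "dC a g' = Suc t" using C.d_walk_split[OF ab(1,2), of "Suc t"] ab t by auto
  obtain g where g: "g \<in> VC" "dC a g = t" "dC g g' = 1" using C.d_walk_split[OF ab(1) g'(1), of t] g' by auto
  have e: "EC g g'" using C.d1_edge g g' by blast
  have "g' \<in> sphere VC EC (dC a g + 1) a \<inter> {z. EC g z}" using g g' e by (auto simp: sphere_def)
  then have "card (sphere VC EC (dC a g + 1) a \<inter> {z. EC g z}) \<noteq> 0"
    using card_0_eq[OF fin_sph] by (metis empty_iff)
  then have "card (sphere VC EC (dC x u + 1) x \<inter> {z. EC u z}) \<noteq> 0"
    using drgC[OF ab(1) g(1) x u] g dt by simp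
  then obtain u' where "u' \<in> sphere VC EC (dC x u + 1) x \<inter> {z. EC u z}" by (metis card.empty ex_in_conv)
  then show ?thesis using dt by (auto simp: sphere_def)
qed

definition H :: "'a \<times> nat \<Rightarrow> 'a \<Rightarrow> nat" where
  "H x w = Min ((\<lambda>y. dC x y) ` {y \<in> VC. fst y = w})"

lemma finF: "finite {y \<in> VC. fst y = w}" using C.fin by simp

lemma H_le: assumes "y \<in> VC" shows "H x (fst y) \<le> dC x y"
proof -
  have "dC x y \<in> (\<lambda>y. dC x y) ` {y' \<in> VC. fst y' = fst y}" using assms by blast
  then show ?thesis unfolding H_def by (intro Min_le) (simp_all add: finF)
qed

lemma H_att: "w \<in> V \<Longrightarrow> \<exists>c\<in>VC. fst c = w \<and> dC x c = H x w"
proof -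
  assume w: "w \<in> V"
  have w0: "(w, 0) \<in> {y \<in> VC. fst y = w}" using w r_pos by auto
  then have "H x w \<in> (\<lambda>y. dC x y) ` {y \<in> VC. fst y = w}"
    unfolding H_def by (intro Min_in finite_imageI finF) (use w0 in blast)
  then show ?thesis by auto
qed

lemma H_adj: assumes x: "x \<in> VC" and u: "EC u u'" shows "H x (fst u) \<le> H x (fst u') + 1"
proof -
  obtain w i w' i' where uu: "u = (w, i)" "u' = (w', i')" by (cases u; cases u')
  have e: "E w w'" "w \<in> V" "w' \<in> V" using u uu by (auto simp: EC_simp)
  obtain c where c: "c \<in> VC" "fst c = w'" "dC x c = H x w'" using H_att e by blast
  obtain j where cj: "c = (w', j)" "j < r" using c by auto
  define c' where "c' = (w, \<pi> w' w j)"
  have ec: "EC c c'" using cj e symG pi_lt by (auto simp: c'_def EC_simp)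
  have c'V: "c' \<in> VC" using C.inV[OF ec] by simp
  have "dC x c' \<le> dC x c + 1" using C.d_adj_diff[OF x ec] by blast
  moreover have "H x w \<le> dC x c'" using H_le[OF c'V] by (simp add: c'_def)
  ultimately show ?thesis using c uu by simp
qed

lemma far_aux:
  assumes x: "x \<in> VC"
  shows "\<forall>u\<in>VC. dC x u = D - k \<longrightarrow> D < 2 * (D - k) \<longrightarrow> H x (fst u) + (D - k) = D"
proof (induction k)
  case 0
  show ?case
  proof (intro ballI impI)
    fix u assume u: "u \<in> VC" and du: "dC x u = D - 0" and "D < 2 * (D - 0)"
    have "fst x = fst u" using anti2[OF x u] du by simp
    then have "H x (fst u) = 0" using H_le[OF x, of x] by simp
    then show "H x (fst u) + (D - 0) = D" by simp
  qed
next
  case (Suc k)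
  show ?case
  proof (intro ballI impI)
    fix u assume u: "u \<in> VC" and du: "dC x u = D - Suc k" and lt: "D < 2 * (D - Suc k)"
    have tD: "D - Suc k < D" using lt by linarith
    obtain u' where u': "EC u u'" "dC x u' = Suc (D - Suc k)" using b_pos[OF tD x u du] by blast
    have u'V: "u' \<in> VC" using C.inV[OF u'(1)] by simp
    have eq: "Suc (D - Suc k) = D - k" using lt by linarith
    have "H x (fst u') + (D - k) = D" using Suc.IH u'V u' eq lt by auto
    then have h1: "H x (fst u) \<le> k + 1" using H_adj[OF x u'(1)] lt by linarith
    obtain c where c: "c \<in> VC" "fst c = fst u" "dC x c = H x (fst u)" using H_att[of "fst u" x] u by auto
    have "c \<noteq> u" using c h1 du lt by auto
    then have "dC u c = D" using anti1[OF u c(1)] c by simp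
    moreover have "dC u c \<le> dC u x + dC x c" using C.d_tri u x c(1) by blast
    moreover have "dC u x = dC x u" using C.d_sym u x by simp
    ultimately have "D \<le> (D - Suc k) + H x (fst u)" using du c by simp
    then show "H x (fst u) + (D - Suc k) = D" using h1 lt by linarith
  qed
qed

lemma far: "x \<in> VC \<Longrightarrow> u \<in> VC \<Longrightarrow> D < 2 * dC x u \<Longrightarrow> H x (fst u) + dC x u = D"
  using far_aux[of x "D - dC x u"] C.d_le_diam[of x u] by auto

lemma profile:
  assumes x: "x \<in> VC" and c: "c \<in> VC" "dC x c = H x (fst c)" and y: "y \<in> VC" "fst y = fst c" "y \<noteq> c"
  shows "dC x y + H x (fst c) = D"
proof -
  have "dC y c = D" using anti1[OF y(1) c(1)] y by simp
  moreover have "dC y c \<le> dC y x + dC x c" using C.d_tri y(1) x c(1) by blast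
  moreover have "dC y x = dC x y" using C.d_sym y(1) x by simp
  ultimately have lo: "D \<le> dC x y + H x (fst c)" using c by simp
  show ?thesis
  proof (cases "D < 2 * dC x y")
    case True then show ?thesis using far[OF x y(1)] y by simp
  next
    case False
    have "H x (fst c) \<le> dC x y" using H_le[OF y(1)] y by simp
    then show ?thesis using lo False by linarith
  qed
qed

lemma H_half: assumes x: "x \<in> VC" and w: "w \<in> V" shows "2 * H x w \<le> D"
proof -
  obtain c where c: "c \<in> VC" "fst c = w" "dC x c = H x w" using H_att w by blast
  obtain i where ci: "c = (w, i)" "i < r" using c by auto
  have r2: "r > 1" using m_gt n_gt by (metis less_1_mult)
  define i' :: nat where "i' = (if i = 0 then 1 else 0)"
  have i': "i' < r" "i' \<noteq> i" using r2 m_pos n_pos by (auto simp: i'_def)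
  have yV: "(w, i') \<in> VC" using w i' by auto
  have "dC x (w, i') + H x w = D" using profile[OF x c(1)] c yV i' ci by auto
  moreover have "H x w \<le> dC x (w, i')" using H_le[OF yV] by simp
  ultimately show ?thesis by linarith
qed

end



context S begin

lemma Bk_sub: "b \<in> Bk B \<Longrightarrow> b \<in> VC \<and> fst b = fst B"
  by (cases b) (auto simp: Bk_def)

lemma Bk_fin: "finite (Bk B)" using C.fin by (simp add: Bk_def)

lemma Bk_p: "a \<in> VC \<Longrightarrow> a \<in> Bk (p a)" by (simp add: Bk_def)

lemma Bk_pI: "b \<in> Bk B \<Longrightarrow> p b = B" by (simp add: Bk_def)

lemma Bk_card: assumes B: "B \<in> VQ" shows "card (Bk B) = n"
proof -
  obtain w k where Bw: "B = (w, k)" "w \<in> V" "k < m" using B by auto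
  have "Bk B = (\<lambda>i. (w, i)) ` {i. i < r \<and> blk i = k}" using Bw by (auto simp: Bk_def)
  then have "card (Bk B) = card {i. i < r \<and> blk i = k}" by (simp add: card_image inj_on_def)
  then show ?thesis using blocks_size Bw by simp
qed

definition g :: "nat \<Rightarrow> nat \<Rightarrow> nat" where
  "g j s = (if s = j then (if 2 * j < D then 1 else n) else if 2 * j < D \<and> s + j = D then n - 1 else 0)"

lemma R1a:
  assumes a: "a \<in> VC" and B: "B \<in> VQ"
  shows "card {b \<in> Bk B. dC a b = s} = g (dQ (p a) B) s"
proof -
  define w where "w = fst B"
  have w: "w \<in> V" using B by (auto simp: w_def)
  obtain c where c: "c \<in> VC" "fst c = w" "dC a c = H a w" using H_att w by blast
  define h where "h = H a w"
  define j where "j = dQ (p a) B"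
  have h2: "2 * h \<le> D" using H_half[OF a w] by (simp add: h_def)
  have dist: "\<forall>b\<in>Bk B. dC a b = (if b = c then h else D - h)"
  proof
    fix b assume b: "b \<in> Bk B"
    show "dC a b = (if b = c then h else D - h)"
    proof (cases "b = c")
      case True then show ?thesis using c by (simp add: h_def)
    next
      case False
      have "dC a b + H a (fst c) = D" using profile[OF a c(1)] c Bk_sub[OF b] False by (simp add: w_def)
      then show ?thesis using False c by (simp add: h_def)
    qed
  qed
  have setq: "{b \<in> Bk B. dC a b = s} = {b \<in> Bk B. (if b = c then h else D - h) = s}"
    using dist by auto
  obtain b0 where b0: "b0 \<in> Bk B" "dC a b0 = j" using K2[OF a B] by (auto simp: j_def)
  have jle: "\<forall>b\<in>Bk B. j \<le> dC a b" using K1[OF a] Bk_sub Bk_pI by (metis j_def)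
  have cardB: "card (Bk B) = n" using Bk_card[OF B] .
  have gsimp: "g j s = (if s = j then (if 2 * j < D then 1 else n) else if 2 * j < D \<and> s + j = D then n - 1 else 0)"
    by (simp add: g_def)
  have jj: "dQ (p a) B = j" by (simp add: j_def)
  show ?thesis
  proof (cases "c \<in> Bk B")
    case True
    have j1: "j \<le> h" using jle True c by (auto simp: h_def)
    have b0V: "b0 \<in> VC" "fst b0 = w" using Bk_sub[OF b0(1)] by (auto simp: w_def)
    have "H a (fst b0) \<le> dC a b0" using H_le[OF b0V(1)] .
    then have j2: "h \<le> j" using b0 b0V by (simp add: h_def)
    have jh: "j = h" using j1 j2 by simp
    show ?thesis
    proof (cases "2 * h < D")
      case True2: True
      have ne: "D - h \<noteq> h" using True2 by linarith
      show ?thesis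
      proof (cases "s = j")
        case True3: True
        have "{b \<in> Bk B. dC a b = s} = {c}" unfolding setq using True True3 jh ne by auto
        then show ?thesis using True3 jh True2 gsimp jj by simp
      next
        case False3: False
        show ?thesis
        proof (cases "s + j = D")
          case True4: True
          have "{b \<in> Bk B. dC a b = s} = Bk B - {c}" unfolding setq using True True4 jh ne False3 by auto
          then have "card {b \<in> Bk B. dC a b = s} = n - 1" using cardB True Bk_fin by simp
          then show ?thesis using False3 True4 jh True2 gsimp jj by simp
        next
          case False4: False
          have E0: "{b \<in> Bk B. dC a b = s} = {}" unfolding setq using False3 False4 jh h2 by auto
          show ?thesis using False3 False4 gsimp jj by (simp only: E0 card.empty) simp
        qed
      qed
    next
      case False2: False
      have hh: "D - h = h" using h2 False2 by linarith
      have "{b \<in> Bk B. dC a b = s} = (if s = j then Bk B else {})" unfolding setq using hh jh by auto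
      then show ?thesis using cardB gsimp jh False2 jj by simp
    qed
  next
    case False
    have all: "\<forall>b\<in>Bk B. dC a b = D - h" using dist False by auto
    have jd: "j = D - h" using all b0 by auto
    have nl: "\<not> 2 * j < D" using jd h2 by linarith
    have "{b \<in> Bk B. dC a b = s} = (if s = j then Bk B else {})" unfolding setq using False jd by auto
    then show ?thesis using cardB gsimp nl jj by simp
  qed
qed

definition \<Phi> :: "'a \<times> nat \<Rightarrow> 'a \<times> nat \<Rightarrow> nat \<Rightarrow> nat" where
  "\<Phi> A B s = (\<Sum>a\<in>Bk A. card {b \<in> Bk B. dC a b = s})"

lemma R1: assumes A: "A \<in> VQ" and B: "B \<in> VQ" shows "\<Phi> A B s = n * g (dQ A B) s"
proof -
  have "\<Phi> A B s = (\<Sum>a\<in>Bk A. g (dQ A B) s)"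
    unfolding \<Phi>_def by (rule sum.cong) (auto simp: R1a[OF _ B] Bk_sub Bk_pI)
  then show ?thesis using Bk_card[OF A] by simp
qed

end



context S begin

definition P :: "'a \<times> nat \<Rightarrow> 'a \<times> nat \<Rightarrow> nat \<Rightarrow> nat" where
  "P a b s = card (sphere VC EC s a \<inter> {z. EC b z})"

lemma NC_fin: "finite {z. EC b z}"
  by (rule finite_subset[OF _ C.fin]) (use C.inV in blast)

lemma NQ_fin: "finite {Z. EQ B Z}"
  by (rule finite_subset[OF _ Q.fin]) (use Q.inV in blast)

lemma uniq_back: assumes "EC b1 z" "EC b2 z" "fst b1 = fst b2" shows "b1 = b2"
proof -
  obtain w i1 i2 w' j where bb: "b1 = (w, i1)" "b2 = (w, i2)" "z = (w', j)" using assms(3)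
    by (cases b1; cases b2; cases z) auto
  have "E w w'" "i1 < r" "i2 < r" "j = \<pi> w w' i1" "j = \<pi> w w' i2" using assms bb by (auto simp: EC_simp)
  then have "i1 = i2" using pi_inj by metis
  then show ?thesis using bb by simp
qed

lemma back_exists: assumes "EQ B Z" "z \<in> Bk Z" shows "\<exists>b\<in>Bk B. EC b z"
proof -
  obtain w k w' l where BZ: "B = (w, k)" "Z = (w', l)" by (cases B; cases Z) auto
  have e: "E w w'" "k < m" "l = \<tau> w w' k" "w \<in> V" "w' \<in> V" using assms(1) BZ by (auto simp: EQ_simp)
  obtain i' where z: "z = (w', i')" "i' < r" "blk i' = l" using assms(2) BZ by (cases z) (auto simp: Bk_def)
  define b where "b = (w, \<pi> w' w i')"
  have e': "E w' w" using symG e by blast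
  have bl: "\<pi> w' w i' < r" using pi_lt[OF e' z(2)] .
  have "EC b z" using e bl pi_inv[OF e' z(2)] z by (auto simp: b_def EC_simp)
  moreover have "blk (\<pi> w' w i') = k"
    using tau_eq[OF e' z(2)] z e tau_inv[OF e(1) e(2)] by simp
  then have "b \<in> Bk B" using BZ e bl by (simp add: b_def Bk_def)
  ultimately show ?thesis by blast
qed

lemma R2a:
  assumes a: "a \<in> VC" and B: "B \<in> VQ"
  shows "(\<Sum>Z\<in>{Z. EQ B Z}. card {z \<in> Bk Z. dC a z = s}) = (\<Sum>b\<in>Bk B. P a b s)"
proof -
  define W where "W = {z \<in> VC. (\<exists>b\<in>Bk B. EC b z) \<and> dC a z = s}"
  have L: "(\<Union>Z\<in>{Z. EQ B Z}. {z \<in> Bk Z. dC a z = s}) = W"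
  proof
    show "(\<Union>Z\<in>{Z. EQ B Z}. {z \<in> Bk Z. dC a z = s}) \<subseteq> W"
    proof
      fix z assume "z \<in> (\<Union>Z\<in>{Z. EQ B Z}. {z \<in> Bk Z. dC a z = s})"
      then obtain Z where Z: "EQ B Z" "z \<in> Bk Z" "dC a z = s" by blast
      obtain b where "b \<in> Bk B" "EC b z" using back_exists[OF Z(1,2)] by blast
      moreover have "z \<in> VC" using Bk_sub[OF Z(2)] by blast
      ultimately show "z \<in> W" unfolding W_def using Z(3) by blast
    qed
    show "W \<subseteq> (\<Union>Z\<in>{Z. EQ B Z}. {z \<in> Bk Z. dC a z = s})"
    proof
      fix z assume "z \<in> W"
      then obtain b where z: "z \<in> VC" "b \<in> Bk B" "EC b z" "dC a z = s" unfolding W_def by blast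
      have "EQ B (p z)" using p_edge[OF z(3)] Bk_pI[OF z(2)] by simp
      then show "z \<in> (\<Union>Z\<in>{Z. EQ B Z}. {z \<in> Bk Z. dC a z = s})" using z Bk_p by blast
    qed
  qed
  have R: "(\<Union>b\<in>Bk B. sphere VC EC s a \<inter> {z. EC b z}) = W"
    unfolding W_def sphere_def by blast
  have "card W = (\<Sum>Z\<in>{Z. EQ B Z}. card {z \<in> Bk Z. dC a z = s})"
    unfolding L[symmetric]
  proof (rule card_UN_disjoint)
    show "finite {Z. EQ B Z}" by (rule NQ_fin)
    show "\<forall>Z\<in>{Z. EQ B Z}. finite {z \<in> Bk Z. dC a z = s}" using Bk_fin by simp
    show "\<forall>Z\<in>{Z. EQ B Z}. \<forall>Z'\<in>{Z. EQ B Z}. Z \<noteq> Z' \<longrightarrow> {z \<in> Bk Z. dC a z = s} \<inter> {z \<in> Bk Z'. dC a z = s} = {}"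
      using Bk_pI by blast
  qed
  moreover have "card W = (\<Sum>b\<in>Bk B. P a b s)"
    unfolding R[symmetric] P_def
  proof (rule card_UN_disjoint)
    show "finite (Bk B)" by (rule Bk_fin)
    show "\<forall>b\<in>Bk B. finite (sphere VC EC s a \<inter> {z. EC b z})" using fin_sph by blast
    show "\<forall>b\<in>Bk B. \<forall>b'\<in>Bk B. b \<noteq> b' \<longrightarrow> (sphere VC EC s a \<inter> {z. EC b z}) \<inter> (sphere VC EC s a \<inter> {z. EC b' z}) = {}"
    proof (intro ballI impI)
      fix b b' assume bb: "b \<in> Bk B" "b' \<in> Bk B" "b \<noteq> b'"
      have "fst b = fst b'" using Bk_sub[OF bb(1)] Bk_sub[OF bb(2)] by simp
      then show "(sphere VC EC s a \<inter> {z. EC b z}) \<inter> (sphere VC EC s a \<inter> {z. EC b' z}) = {}"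
        using uniq_back bb(3) by blast
    qed
  qed
  ultimately show ?thesis by simp
qed

lemma R2: assumes A: "A \<in> VQ" and B: "B \<in> VQ"
  shows "(\<Sum>Z\<in>{Z. EQ B Z}. \<Phi> A Z s) = (\<Sum>a\<in>Bk A. \<Sum>b\<in>Bk B. P a b s)"
proof -
  have "(\<Sum>Z\<in>{Z. EQ B Z}. \<Phi> A Z s) = (\<Sum>a\<in>Bk A. \<Sum>Z\<in>{Z. EQ B Z}. card {z \<in> Bk Z. dC a z = s})"
    unfolding \<Phi>_def by (rule sum.swap)
  also have "\<dots> = (\<Sum>a\<in>Bk A. \<Sum>b\<in>Bk B. P a b s)"
    by (rule sum.cong[OF refl]) (use R2a[OF _ B] Bk_sub in blast)
  finally show ?thesis .
qed

lemma deg_eq: assumes b: "b \<in> VC" shows "card {z. EC b z} = card (sphere VC EC (dC b b + 1) b \<inter> {z. EC b z})"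
proof -
  have h: "\<forall>z. EC b z \<longrightarrow> z \<in> VC \<and> dC b z = 1" using C.d_adj C.inV by blast
  have "sphere VC EC (dC b b + 1) b \<inter> {z. EC b z} = {z. EC b z}"
    unfolding sphere_def using h by auto
  then show ?thesis by simp
qed

lemma R5:
  assumes ab: "a \<in> VC" "b \<in> VC" and ab': "a' \<in> VC" "b' \<in> VC" and eq: "dC a b = dC a' b'"
  shows "P a b s = P a' b' s"
proof -
  define t where "t = dC a b"
  have t': "dC a' b' = t" using eq by (simp add: t_def)
  have dr: "P a b (t - 1) = P a' b' (t - 1) \<and> P a b (t + 1) = P a' b' (t + 1)"
    using drgC[OF ab ab' eq] eq by (simp add: P_def t_def)
  have rng: "\<And>x y z. x \<in> VC \<Longrightarrow> EC y z \<Longrightarrow> dC x z \<le> dC x y + 1 \<and> dC x y \<le> dC x z + 1"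
    using C.d_adj_diff by blast
  have zero: "P x y s = 0" if "x \<in> VC" "s + 1 < dC x y \<or> s > dC x y + 1" for x y
  proof -
    have "sphere VC EC s x \<inter> {z. EC y z} = {}"
    proof (rule equals0I)
      fix z assume "z \<in> sphere VC EC s x \<inter> {z. EC y z}"
      then have z: "EC y z" "dC x z = s" by (auto simp: sphere_def)
      show False using rng[OF that(1) z(1)] z(2) that(2) by linarith
    qed
    then show ?thesis by (simp add: P_def)
  qed
  have split: "card {z. EC y z} = P x y (t - 1) + P x y t + P x y (t + 1)" if "x \<in> VC" "dC x y = t" "t \<ge> 1" for x y
  proof -
    have U: "{z. EC y z} = (sphere VC EC (t - 1) x \<inter> {z. EC y z}) \<union> (sphere VC EC t x \<inter> {z. EC y z})
        \<union> (sphere VC EC (t + 1) x \<inter> {z. EC y z})" (is "?L = ?R")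
    proof
      show "?L \<subseteq> ?R"
      proof
        fix z assume z: "z \<in> ?L"
        then have "z \<in> VC" using C.inV by blast
        moreover have "dC x z = t - 1 \<or> dC x z = t \<or> dC x z = t + 1"
          using rng[OF that(1), of y z] z that(2) by simp linarith
        ultimately show "z \<in> ?R" using z by (auto simp: sphere_def)
      qed
    qed auto
    define S1 where "S1 = sphere VC EC (t - 1) x \<inter> {z. EC y z}"
    define S2 where "S2 = sphere VC EC t x \<inter> {z. EC y z}"
    define S3 where "S3 = sphere VC EC (t + 1) x \<inter> {z. EC y z}"
    have f: "finite S1" "finite S2" "finite S3" unfolding S1_def S2_def S3_def by (simp_all add: fin_sph)
    have d12: "S1 \<inter> S2 = {}" using that(3) unfolding S1_def S2_def sphere_def by auto
    have d3: "(S1 \<union> S2) \<inter> S3 = {}" using that(3) unfolding S1_def S2_def S3_def sphere_def by auto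
    have "card (S1 \<union> S2 \<union> S3) = card (S1 \<union> S2) + card S3"
      by (rule card_Un_disjoint) (use f d3 in auto)
    also have "card (S1 \<union> S2) = card S1 + card S2"
      by (rule card_Un_disjoint) (use f d12 in auto)
    finally have "card {z. EC y z} = card S1 + card S2 + card S3"
      using U unfolding S1_def S2_def S3_def by simp
    then show ?thesis by (simp add: P_def S1_def S2_def S3_def)
  qed
  show ?thesis
  proof (cases "s = t - 1 \<or> s = t + 1")
    case True then show ?thesis using dr by auto
  next
    case False
    show ?thesis
    proof (cases "s = t")
      case True
      then have t1: "t \<ge> 1" using False by auto
      have "card {z. EC b z} = card {z. EC b' z}"
        using deg_eq[OF ab(2)] deg_eq[OF ab'(2)] drgC[OF ab(2) ab(2) ab'(2) ab'(2)] by simp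
      then show ?thesis using split[OF ab(1) _ t1] split[OF ab'(1) t' t1] dr True by (simp add: t_def)
    next
      case False2: False
      have "s + 1 < t \<or> s > t + 1" using False False2 by linarith
      then show ?thesis using zero[OF ab(1)] zero[OF ab'(1)] t' by (simp add: t_def)
    qed
  qed
qed

definition Pi :: "nat \<Rightarrow> nat \<Rightarrow> nat" where
  "Pi u s = (if \<exists>ab. fst ab \<in> VC \<and> snd ab \<in> VC \<and> dC (fst ab) (snd ab) = u
     then (let ab = SOME ab. fst ab \<in> VC \<and> snd ab \<in> VC \<and> dC (fst ab) (snd ab) = u in P (fst ab) (snd ab) s) else 0)"

lemma P_Pi: assumes "a \<in> VC" "b \<in> VC" shows "P a b s = Pi (dC a b) s"
proof -
  let ?Q = "\<lambda>ab. fst ab \<in> VC \<and> snd ab \<in> VC \<and> dC (fst ab) (snd ab) = dC a b"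
  have ex: "\<exists>ab. ?Q ab" using assms by (intro exI[of _ "(a, b)"]) simp
  define ab0 where "ab0 = (SOME ab. ?Q ab)"
  have q: "?Q ab0" using someI_ex[OF ex] by (simp add: ab0_def)
  have "P a b s = P (fst ab0) (snd ab0) s"
    using R5[OF assms(1) assms(2), of "fst ab0" "snd ab0" s] q by simp
  then show ?thesis using ex unfolding Pi_def Let_def ab0_def by simp
qed

lemma R3: assumes A: "A \<in> VQ" and B: "B \<in> VQ"
  shows "(\<Sum>a\<in>Bk A. \<Sum>b\<in>Bk B. P a b s) = (\<Sum>u\<le>D. n * g (dQ A B) u * Pi u s)"
proof -
  have inner: "(\<Sum>b\<in>Bk B. P a b s) = (\<Sum>u\<le>D. card {b \<in> Bk B. dC a b = u} * Pi u s)" if a: "a \<in> VC" for a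
  proof -
    have "(\<Sum>b\<in>Bk B. P a b s) = (\<Sum>b\<in>Bk B. Pi (dC a b) s)"
      by (rule sum.cong[OF refl]) (use P_Pi a Bk_sub in blast)
    also have "\<dots> = (\<Sum>u\<le>D. \<Sum>b\<in>{b. b \<in> Bk B \<and> dC a b = u}. Pi (dC a b) s)"
    proof (rule sum.group[symmetric])
      show "finite (Bk B)" by (rule Bk_fin)
      show "finite {..D}" by simp
      have "\<forall>b\<in>Bk B. dC a b \<le> D" using C.d_le_diam[OF a] Bk_sub by blast
      then show "(\<lambda>b. dC a b) ` Bk B \<subseteq> {..D}" by auto
    qed
    also have "\<dots> = (\<Sum>u\<le>D. card {b \<in> Bk B. dC a b = u} * Pi u s)"
      by (rule sum.cong[OF refl]) simp
    finally show ?thesis .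
  qed
  have "(\<Sum>a\<in>Bk A. \<Sum>b\<in>Bk B. P a b s) = (\<Sum>a\<in>Bk A. \<Sum>u\<le>D. card {b \<in> Bk B. dC a b = u} * Pi u s)"
    by (rule sum.cong[OF refl]) (use inner Bk_sub in blast)
  also have "\<dots> = (\<Sum>u\<le>D. \<Sum>a\<in>Bk A. card {b \<in> Bk B. dC a b = u} * Pi u s)"
    by (rule sum.swap)
  also have "\<dots> = (\<Sum>u\<le>D. \<Phi> A B u * Pi u s)"
    unfolding \<Phi>_def by (simp add: sum_distrib_right)
  also have "\<dots> = (\<Sum>u\<le>D. n * g (dQ A B) u * Pi u s)"
    using R1[OF A B] by simp
  finally show ?thesis .
qed

lemma KEY: assumes A: "A \<in> VQ" and B: "B \<in> VQ"
  shows "(\<Sum>Z\<in>{Z. EQ B Z}. n * g (dQ A Z) s) = (\<Sum>u\<le>D. n * g (dQ A B) u * Pi u s)"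
proof -
  have "(\<Sum>Z\<in>{Z. EQ B Z}. n * g (dQ A Z) s) = (\<Sum>Z\<in>{Z. EQ B Z}. \<Phi> A Z s)"
    by (rule sum.cong[OF refl]) (use R1[OF A] Q.inV in auto)
  then show ?thesis using R2[OF A B] R3[OF A B] by simp
qed

end



lemma sum3:
  fixes N :: "'b set" and \<delta> :: "'b \<Rightarrow> nat" and F :: "nat \<Rightarrow> nat"
  assumes fin: "finite N" and j: "j \<ge> 1" and rng: "\<forall>Z\<in>N. \<delta> Z \<in> {j - 1, j, j + 1}"
  shows "(\<Sum>Z\<in>N. F (\<delta> Z)) = card {Z\<in>N. \<delta> Z = j - 1} * F (j - 1) + card {Z\<in>N. \<delta> Z = j} * F j
           + card {Z\<in>N. \<delta> Z = j + 1} * F (j + 1)"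
proof -
  have "(\<Sum>Z\<in>N. F (\<delta> Z)) = (\<Sum>i\<in>{j - 1, j, j + 1}. \<Sum>Z\<in>{Z. Z \<in> N \<and> \<delta> Z = i}. F (\<delta> Z))"
  proof (rule sum.group[symmetric])
    show "finite N" by (rule fin)
    show "finite {j - 1, j, j + 1}" by simp
    show "\<delta> ` N \<subseteq> {j - 1, j, j + 1}" using rng by blast
  qed
  also have "\<dots> = (\<Sum>i\<in>{j - 1, j, j + 1}. card {Z\<in>N. \<delta> Z = i} * F i)"
    by (rule sum.cong[OF refl]) simp
  also have "\<dots> = card {Z\<in>N. \<delta> Z = j - 1} * F (j - 1) + card {Z\<in>N. \<delta> Z = j} * F j
           + card {Z\<in>N. \<delta> Z = j + 1} * F (j + 1)"
  proof -
    have d: "j - 1 \<noteq> j" "j - 1 \<noteq> j + 1" "j \<noteq> j + 1" using j by auto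
    then show ?thesis by (simp add: add.assoc)
  qed
  finally show ?thesis .
qed

context S begin

lemma g_diag: "g i i > 0" using n_pos unfolding g_def by auto
lemma g_z: assumes "s \<noteq> j" "\<not> (2 * j < D \<and> s + j = D)" shows "g j s = 0"
  unfolding g_def if_not_P[OF assms(1)] if_not_P[OF assms(2)] by (rule refl)
lemma g_z1: "j \<ge> 1 \<Longrightarrow> g j (j - 1) = 0" by (rule g_z; arith)
lemma g_z2: "g (j + 1) (j - 1) = 0" by (rule g_z; arith)
lemma g_z3: "g (j + 1) j = 0" by (rule g_z; arith)

lemma KEY2:
  assumes X: "X \<in> VQ" "Y \<in> VQ" and X': "X' \<in> VQ" "Y' \<in> VQ" and eq: "dQ X Y = dQ X' Y'"
  shows "(\<Sum>Z\<in>{Z. EQ Y Z}. n * g (dQ X Z) s) = (\<Sum>Z\<in>{Z. EQ Y' Z}. n * g (dQ X' Z) s)"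
  using KEY[OF X] KEY[OF X'] eq by simp

lemma rngQ: "X \<in> VQ \<Longrightarrow> EQ Y Z \<Longrightarrow> dQ X Z \<in> {dQ X Y - 1, dQ X Y, dQ X Y + 1}"
  using Q.d_adj_diff[of X Y Z] by auto

lemma drgQ: "distance_regular VQ EQ"
proof -
  have main: "card (sphere VQ EQ (dQ X Y - 1) X \<inter> {z. EQ Y z}) = card (sphere VQ EQ (dQ X' Y' - 1) X' \<inter> {z. EQ Y' z})
      \<and> card (sphere VQ EQ (dQ X Y + 1) X \<inter> {z. EQ Y z}) = card (sphere VQ EQ (dQ X' Y' + 1) X' \<inter> {z. EQ Y' z})"
    if X: "X \<in> VQ" "Y \<in> VQ" and X': "X' \<in> VQ" "Y' \<in> VQ" and eq: "dQ X Y = dQ X' Y'" for X Y X' Y'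
  proof -
    define j where "j = dQ X Y"
    have j': "dQ X' Y' = j" using eq by (simp add: j_def)
    have sph: "sphere VQ EQ k A \<inter> {z. EQ B z} = {Z \<in> {Z. EQ B Z}. dQ A Z = k}" for k A B
      unfolding sphere_def using Q.inV by blast
    have K: "\<And>s. (\<Sum>Z\<in>{Z. EQ Y Z}. n * g (dQ X Z) s) = (\<Sum>Z\<in>{Z. EQ Y' Z}. n * g (dQ X' Z) s)"
      using KEY2[OF X X' eq] .
    show ?thesis
    proof (cases "j = 0")
      case True
      have XY: "X = Y" "X' = Y'" using True j' Q.d_0 X X' by (auto simp: j_def)
      have n1: "\<forall>Z\<in>{Z. EQ X Z}. dQ X Z = 1" using Q.d_adj by blast
      have n1': "\<forall>Z\<in>{Z. EQ X' Z}. dQ X' Z = 1" using Q.d_adj by blast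
      have e0: "{Z \<in> {Z. EQ A Z}. dQ A Z = 0} = {}" if "A \<in> VQ" for A
        using Q.d_0[OF that] Q.irr Q.inV by blast
      have c1: "{Z \<in> {Z. EQ A Z}. dQ A Z = 1} = {Z. EQ A Z}" if "\<forall>Z\<in>{Z. EQ A Z}. dQ A Z = 1" for A
        using that by blast
      have "(\<Sum>Z\<in>{Z. EQ X Z}. n * g (dQ X Z) 1) = (\<Sum>Z\<in>{Z. EQ X Z}. n * g 1 1)"
        by (rule sum.cong[OF refl]) (metis n1)
      moreover have "(\<Sum>Z\<in>{Z. EQ X' Z}. n * g (dQ X' Z) 1) = (\<Sum>Z\<in>{Z. EQ X' Z}. n * g 1 1)"
        by (rule sum.cong[OF refl]) (metis n1')
      ultimately have "card {Z. EQ X Z} = card {Z. EQ X' Z}"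
        using K[of 1] XY g_diag[of 1] n_pos by (simp only: sum_constant) simp
      moreover have "sphere VQ EQ (dQ X Y - 1) X \<inter> {z. EQ Y z} = {}"
        unfolding sph using e0[OF X(1)] True XY by (simp add: j_def)
      moreover have "sphere VQ EQ (dQ X' Y' - 1) X' \<inter> {z. EQ Y' z} = {}"
        unfolding sph using e0[OF X'(1)] True XY j' by simp
      moreover have "sphere VQ EQ (dQ X Y + 1) X \<inter> {z. EQ Y z} = {Z. EQ X Z}"
        unfolding sph using c1[OF n1] True XY by (simp add: j_def)
      moreover have "sphere VQ EQ (dQ X' Y' + 1) X' \<inter> {z. EQ Y' z} = {Z. EQ X' Z}"
        unfolding sph using c1[OF n1'] True XY j' by simp
      ultimately show ?thesis by simp
    next
      case False
      then have j1: "j \<ge> 1" by simp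
      define c where "c A B = card {Z \<in> {Z. EQ B Z}. dQ A Z = j - 1}" for A B
      define a where "a A B = card {Z \<in> {Z. EQ B Z}. dQ A Z = j}" for A B
      define b where "b A B = card {Z \<in> {Z. EQ B Z}. dQ A Z = j + 1}" for A B
      have S: "(\<Sum>Z\<in>{Z. EQ B Z}. n * g (dQ A Z) s) = c A B * (n * g (j - 1) s) + a A B * (n * g j s) + b A B * (n * g (j + 1) s)"
        if SA: "A \<in> VQ" "dQ A B = j" for A B s
        unfolding a_def b_def c_def
      proof (rule sum3[OF NQ_fin j1])
        show "\<forall>Z\<in>{Z. EQ B Z}. dQ A Z \<in> {j - 1, j, j + 1}"
        proof
          fix Z assume "Z \<in> {Z. EQ B Z}"
          then show "dQ A Z \<in> {j - 1, j, j + 1}" using rngQ[OF SA(1), of B Z] SA(2) by simp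
        qed
      qed
      have E: "c X Y * (n * g (j - 1) s) + a X Y * (n * g j s) + b X Y * (n * g (j + 1) s)
            = c X' Y' * (n * g (j - 1) s) + a X' Y' * (n * g j s) + b X' Y' * (n * g (j + 1) s)" for s
        using K[of s] S[OF X(1)] S[OF X'(1) j'] by (simp add: j_def)
      have p0: "n * g i i > 0" for i using n_pos g_diag by simp
      have cc: "c X Y = c X' Y'"
        using E[of "j - 1"] g_z1[OF j1] g_z2[of j] p0[of "j - 1"] by simp
      have aa: "a X Y = a X' Y'"
        using E[of j] cc g_z3[of j] p0[of j] by simp
      have bb: "b X Y = b X' Y'"
        using E[of "j + 1"] cc aa p0[of "j + 1"] by simp
      show ?thesis unfolding sph j_def[symmetric] j' using cc bb by (simp add: c_def b_def)
    qed
  qed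
  show ?thesis unfolding distance_regular_def using gQ connQ main by blast
qed

lemma sameQ: assumes A: "A \<in> VQ" and B: "B \<in> VQ" and f: "fst A = fst B" and ne: "A \<noteq> B"
  shows "dQ A B = D"
proof -
  obtain a where a: "a \<in> VC" "p a = A" using p_onto[OF A] by blast
  obtain b where b: "b \<in> Bk B" "dC a b = dQ (p a) B" using K2[OF a(1) B] by blast
  have bV: "b \<in> VC" "fst b = fst B" "p b = B" using Bk_sub[OF b(1)] Bk_pI[OF b(1)] by auto
  have "fst a = fst A" using a by (cases a) auto
  moreover have "a \<noteq> b" using a bV ne by auto
  ultimately have "dC a b = D" using anti1[OF a(1) bV(1)] f bV by simp
  then show ?thesis using b a by simp
qed

lemma diamQ: "diameter VQ EQ = D"
proof -
  have ub: "dQ A B \<le> D" if AB: "A \<in> VQ" "B \<in> VQ" for A B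
  proof -
    obtain a where a: "a \<in> VC" "p a = A" using p_onto[OF AB(1)] by blast
    obtain b where b: "b \<in> VC" "p b = B" using p_onto[OF AB(2)] by blast
    show ?thesis using K1[OF a(1) b(1)] C.d_le_diam[OF a(1) b(1)] a b by simp
  qed
  obtain v where v: "v \<in> V" using C.nonempty by auto
  have att: "dQ (v, 0) (v, 1) = D" using sameQ[of "(v, 0)" "(v, 1)"] v m_gt by simp
  show ?thesis unfolding diameter_def[of VQ EQ]
  proof (rule Max_eqI)
    show "finite {dQ x y |x y. x \<in> VQ \<and> y \<in> VQ}" by (rule finite_image_set2; use Q.fin in simp)
    show "\<And>y. y \<in> {dQ x y |x y. x \<in> VQ \<and> y \<in> VQ} \<Longrightarrow> y \<le> D" using ub by blast
    have "(v, 0) \<in> VQ" "(v, 1) \<in> VQ" using v m_gt by auto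
    then show "D \<in> {dQ x y |x y. x \<in> VQ \<and> y \<in> VQ}" using att[symmetric] by blast
  qed
qed

lemma antiQ: "antipodal_cover V E VQ EQ fst m"
proof -
  have "(A = B \<or> dQ A B = diameter VQ EQ) \<longleftrightarrow> fst A = fst B" if AB: "A \<in> VQ" "B \<in> VQ" for A B
  proof
    assume h: "A = B \<or> dQ A B = diameter VQ EQ"
    show "fst A = fst B"
    proof (cases "A = B")
      case False
      then have dd: "dQ A B = D" using h diamQ by simp
      obtain a where a: "a \<in> VC" "p a = A" using p_onto[OF AB(1)] by blast
      obtain b where b: "b \<in> Bk B" "dC a b = dQ (p a) B" using K2[OF a(1) AB(2)] by blast
      have bV: "b \<in> VC" "fst b = fst B" using Bk_sub[OF b(1)] by auto
      have "fst a = fst b" using anti2[OF a(1) bV(1)] b dd a by simp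
      then show ?thesis using a bV by (cases a) auto
    qed simp
  next
    assume "fst A = fst B" then show "A = B \<or> dQ A B = diameter VQ EQ" using sameQ AB diamQ by auto
  qed
  then show ?thesis unfolding antipodal_cover_def using noncomplete Q_rcover connQ by blast
qed

lemma lift1: assumes e: "EQ A B" and x: "x \<in> Bk A"
  shows "\<exists>y. y \<in> Bk B \<and> EC x y \<and> (\<forall>y'. y' \<in> Bk B \<and> EC x y' \<longrightarrow> y' = y)"
proof -
  obtain v i where xv: "x = (v, i)" "v \<in> V" "i < r" "A = (v, blk i)" using x by (cases x) (auto simp: Bk_def)
  obtain w l where B: "B = (w, l)" by (cases B)
  have ew: "E v w" "l = \<tau> v w (blk i)" "w \<in> V" using e xv B by (auto simp: EQ_simp)
  define y where "y = (w, \<pi> v w i)"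
  have ey: "EC x y" using xv ew pi_lt by (auto simp: y_def EC_simp)
  have yB: "y \<in> Bk B" using ew xv pi_lt tau_eq B by (auto simp: y_def Bk_def)
  have "\<forall>y'. y' \<in> Bk B \<and> EC x y' \<longrightarrow> y' = y"
  proof (intro allI impI)
    fix y' assume h: "y' \<in> Bk B \<and> EC x y'"
    obtain w' j where y': "y' = (w', j)" by (cases y')
    have "w' = w" using h y' B Bk_sub by fastforce
    then show "y' = y" using h y' xv by (auto simp: EC_simp y_def)
  qed
  then show ?thesis using ey yB by blast
qed

lemma noself: "x \<in> Bk A \<Longrightarrow> y \<in> Bk A \<Longrightarrow> \<not> EC x y"
  using p_edge Q.irr Bk_pI by metis

lemma TRI:
  assumes eAB: "EQ A B" and eBC: "EQ B Cc" and eAC: "EQ A Cc" and x: "x \<in> Bk A"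
  shows "card {y \<in> Bk A \<union> Bk B \<union> Bk Cc. EC x y} = 2 \<and>
    (\<forall>y\<in>Bk A \<union> Bk B \<union> Bk Cc. \<forall>z\<in>Bk A \<union> Bk B \<union> Bk Cc. EC x y \<and> EC x z \<and> y \<noteq> z \<longrightarrow> EC y z)"
proof -
  obtain yB where yB: "yB \<in> Bk B" "EC x yB" "\<forall>y'. y' \<in> Bk B \<and> EC x y' \<longrightarrow> y' = yB" using lift1[OF eAB x] by blast
  obtain yC where yC: "yC \<in> Bk Cc" "EC x yC" "\<forall>y'. y' \<in> Bk Cc \<and> EC x y' \<longrightarrow> y' = yC" using lift1[OF eAC x] by blast
  have BC: "B \<noteq> Cc" using eBC Q.irr by blast
  have ne: "yB \<noteq> yC" using yB yC BC Bk_pI by metis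
  have N: "{y \<in> Bk A \<union> Bk B \<union> Bk Cc. EC x y} = {yB, yC}"
    using yB yC noself[OF x] by blast
  obtain v i where xv: "x = (v, i)" "v \<in> V" "i < r" "A = (v, blk i)" using x by (cases x) (auto simp: Bk_def)
  obtain w l where yBv: "yB = (w, l)" by (cases yB)
  obtain z k where yCv: "yC = (z, k)" by (cases yC)
  have e1: "E v w" "l = \<pi> v w i" "w \<in> V" using yB(2) xv yBv by (auto simp: EC_simp)
  have e2: "E v z" "k = \<pi> v z i" "z \<in> V" using yC(2) xv yCv by (auto simp: EC_simp)
  have e3: "E w z" using eBC Bk_sub[OF yB(1)] Bk_sub[OF yC(1)] yBv yCv
    by (cases B; cases Cc) (auto simp: EQ_simp)
  have comm: "\<pi> w z (\<pi> v w i) = \<pi> v z i"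
  proof -
    have "\<pi> z v (\<pi> w z (\<pi> v w i)) = i" using pi_tri[OF e1(1) e3 symG[OF e2(1)] xv(3)] .
    then have "\<pi> v z (\<pi> z v (\<pi> w z (\<pi> v w i))) = \<pi> v z i" by simp
    moreover have "\<pi> v z (\<pi> z v (\<pi> w z (\<pi> v w i))) = \<pi> w z (\<pi> v w i)"
      using pi_inv[OF symG[OF e2(1)]] pi_lt e1 e3 xv by auto
    ultimately show ?thesis by simp
  qed
  have eBC': "EC yB yC" using comm yBv yCv e1 e2 e3 pi_lt xv by (auto simp: EC_simp)
  have eCB': "EC yC yB" using C.symE[OF eBC'] .
  show ?thesis
  proof
    show "card {y \<in> Bk A \<union> Bk B \<union> Bk Cc. EC x y} = 2" unfolding N using ne by simp
    show "\<forall>y\<in>Bk A \<union> Bk B \<union> Bk Cc. \<forall>z\<in>Bk A \<union> Bk B \<union> Bk Cc. EC x y \<and> EC x z \<and> y \<noteq> z \<longrightarrow> EC y z"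
    proof (intro ballI impI)
      fix y z' assume h: "y \<in> Bk A \<union> Bk B \<union> Bk Cc" "z' \<in> Bk A \<union> Bk B \<union> Bk Cc" "EC x y \<and> EC x z' \<and> y \<noteq> z'"
      have "y \<in> {yB, yC}" "z' \<in> {yB, yC}" using h N by blast+
      then show "EC y z'" using h eBC' eCB' by auto
    qed
  qed
qed

lemma rcoverQC: "r_cover VQ EQ VC EC p n"
proof -
  have fib: "fibre VC p A = Bk A" for A by (simp add: fibre_def Bk_def)
  have img: "p ` VC = VQ"
  proof
    show "p ` VC \<subseteq> VQ" using p_in by (simp add: image_subset_iff)
    show "VQ \<subseteq> p ` VC"
    proof
      fix A assume "A \<in> VQ"
      then obtain a where "a \<in> VC" "p a = A" using p_onto by blast
      then show "A \<in> p ` VC" by (metis imageI)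
    qed
  qed
  have cocl: "\<forall>A\<in>VQ. coclique EC (fibre VC p A)"
    unfolding fib coclique_def using noself by blast
  have nonadj: "\<forall>A\<in>VQ. \<forall>B\<in>VQ. A \<noteq> B \<and> \<not> EQ A B \<longrightarrow> coclique EC (fibre VC p A \<union> fibre VC p B)"
  proof (intro ballI impI)
    fix A B assume "A \<in> VQ" "B \<in> VQ" "A \<noteq> B \<and> \<not> EQ A B"
    then have nab: "\<not> EQ A B" "\<not> EQ B A" using Q.symE by blast+
    show "coclique EC (fibre VC p A \<union> fibre VC p B)"
      unfolding fib coclique_def
    proof (intro ballI notI)
      fix x y assume xy: "x \<in> Bk A \<union> Bk B" "y \<in> Bk A \<union> Bk B" "EC x y"
      have "EQ (p x) (p y)" using p_edge[OF xy(3)] .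
      then show False using xy(1,2) nab noself[of x _ y] xy(3) Bk_pI by blast
    qed
  qed
  have pm: "\<forall>A B. EQ A B \<longrightarrow> perfect_matching_on EC (fibre VC p A \<union> fibre VC p B)"
  proof (intro allI impI)
    fix A B assume e: "EQ A B"
    have one: "card {y \<in> Bk A' \<union> Bk B'. EC x y} = 1" if oneh: "EQ A' B'" "x \<in> Bk A'" for A' B' x
    proof -
      obtain y where y: "y \<in> Bk B'" "EC x y" "\<forall>y'. y' \<in> Bk B' \<and> EC x y' \<longrightarrow> y' = y" using lift1[OF oneh(1,2)] by blast
      have "{y \<in> Bk A' \<union> Bk B'. EC x y} = {y}" using y noself[OF oneh(2)] by blast
      then show ?thesis by simp
    qed
    show "perfect_matching_on EC (fibre VC p A \<union> fibre VC p B)"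
      unfolding perfect_matching_on_def fib
    proof
      fix x assume "x \<in> Bk A \<union> Bk B"
      then show "card {y \<in> Bk A \<union> Bk B. EC x y} = 1"
      proof
        assume "x \<in> Bk A" then show ?thesis using one[OF e] by simp
      next
        assume "x \<in> Bk B" then show ?thesis using one[OF Q.symE[OF e]] by (simp add: Un_commute)
      qed
    qed
  qed
  have tri: "\<forall>A B Cc. EQ A B \<and> EQ B Cc \<and> EQ A Cc \<longrightarrow> triangles_on EC (fibre VC p A \<union> fibre VC p B \<union> fibre VC p Cc)"
  proof (intro allI impI)
    fix A B Cc assume h: "EQ A B \<and> EQ B Cc \<and> EQ A Cc"
    have e: "EQ A B" "EQ B Cc" "EQ A Cc" "EQ B A" "EQ Cc B" "EQ Cc A" using h Q.symE by blast+
    show "triangles_on EC (fibre VC p A \<union> fibre VC p B \<union> fibre VC p Cc)"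
      unfolding triangles_on_def fib
    proof
      fix x assume "x \<in> Bk A \<union> Bk B \<union> Bk Cc"
      then consider "x \<in> Bk A" | "x \<in> Bk B" | "x \<in> Bk Cc" by blast
      then show "card {y \<in> Bk A \<union> Bk B \<union> Bk Cc. EC x y} = 2 \<and>
          (\<forall>y\<in>Bk A \<union> Bk B \<union> Bk Cc. \<forall>z\<in>Bk A \<union> Bk B \<union> Bk Cc. EC x y \<and> EC x z \<and> y \<noteq> z \<longrightarrow> EC y z)"
      proof cases
        case 1 then show ?thesis using TRI[OF e(1) e(2) e(3)] by blast
      next
        case 2
        have "Bk B \<union> Bk A \<union> Bk Cc = Bk A \<union> Bk B \<union> Bk Cc" by blast
        then show ?thesis using TRI[OF e(4) e(3) e(2) 2] by simp
      next
        case 3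
        have "Bk Cc \<union> Bk A \<union> Bk B = Bk A \<union> Bk B \<union> Bk Cc" by blast
        then show ?thesis using TRI[OF e(6) e(1) e(5) 3] by simp
      qed
    qed
  qed
  have card: "\<forall>A\<in>VQ. card (fibre VC p A) = n" using Bk_card by (simp add: fib)
  show ?thesis unfolding r_cover_def is_cover_def
    using gQ gC img cocl nonadj pm tri card by blast
qed

lemma conclusion:
  "r_cover VQ EQ VC EC (\<lambda>(v, i). (v, blk i)) n \<and> antipodal_cover V E VQ EQ fst m \<and> distance_regular VQ EQ"
  using rcoverQC antiQ drgQ by (simp add: p_def)

end

theorem theorem3p1:
  fixes V :: "'a set" and E :: "'a \<Rightarrow> 'a \<Rightarrow> bool" and T :: "'a set set"
    and m n :: nat and \<pi> :: "'a \<Rightarrow> 'a \<Rightarrow> nat \<Rightarrow> nat"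
    and blk :: "nat \<Rightarrow> nat" and \<tau> :: "'a \<Rightarrow> 'a \<Rightarrow> nat \<Rightarrow> nat"
  assumes drg: "distance_regular V E"
    and noncomplete: "\<not> complete_graph V E"
    and tree: "spanning_tree V E T"
    and m_gt: "m > 1" and n_gt: "n > 1"
    and rho: "fg_rep V E T (m * n) \<pi>"
    and rho_trans: "transitive_rep E (m * n) \<pi>"
    and blocks_onto: "blk ` {0..<m * n} = {0..<m}"
    and blocks_size: "\<forall>k<m. card {i. i < m * n \<and> blk i = k} = n"
    and blocks_inv: "\<forall>v w. E v w \<longrightarrow> (\<forall>i<m * n. \<forall>j<m * n.
                        blk i = blk j \<longrightarrow> blk (\<pi> v w i) = blk (\<pi> v w j))"
    and sigma: "\<forall>v w. E v w \<longrightarrow> (\<forall>i<m * n. \<tau> v w (blk i) = blk (\<pi> v w i))"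
    and cover_drg: "distance_regular (V \<times> {0..<m * n}) (cover_graph V E (m * n) \<pi>)"
    and cover_antipodal: "antipodal_cover V E (V \<times> {0..<m * n}) (cover_graph V E (m * n) \<pi>) fst (m * n)"
  shows "r_cover (V \<times> {0..<m}) (cover_graph V E m \<tau>) (V \<times> {0..<m * n}) (cover_graph V E (m * n) \<pi>)
            (\<lambda>(v, i). (v, blk i)) n
       \<and> antipodal_cover V E (V \<times> {0..<m}) (cover_graph V E m \<tau>) fst m
       \<and> distance_regular (V \<times> {0..<m}) (cover_graph V E m \<tau>)"
proof -
  have "S V E T m n \<pi> blk \<tau>"
    unfolding S_def using drg noncomplete m_gt n_gt rho blocks_onto blocks_size sigma cover_drg cover_antipodal
    by blast
  then show ?thesis by (rule S.conclusion)
qed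

end
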